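(* Let $p\in\mathbb{C}[z_1,\dots,z_d]$ have no zeros in $\mathbb{D}^d$ and vanish to order $M$ at $u=(1,\dots,1)$, and let $q\in\mathbb{C}[z_1,\dots,z_d]$, $f=q/p$. Then $f$ is bounded along non-tangential approach regions to $u$ if and only if $q$ vanishes to order at least $M$ at $u$.
   Context: $\mathbb{D}$ is the open unit disk; $RHP=\{\zeta\in\mathbb{C}:\mathrm{Re}\,\zeta>0\}$. A polynomial vanishes to order $M$ at $u$ if the lowest-degree nonzero homogeneous term of $\zeta\mapsto p(u-\zeta)$ has degree $M$. For $\zeta\in RHP^d$ let $D_\zeta=\{|\zeta_1|,\dots,|\zeta_d|,\mathrm{Re}\,\zeta_1,\dots,\mathrm{Re}\,\zeta_d\}$, and for $c>1$ let $AR_c=\{\zeta\in RHP^d: 1/c\le x/y\le c \text{ for all } x,y\in D_\zeta\}$. "$f$ is bounded along non-tangential approach regions to $u$" means: for every $c>1$, $f(u-\zeta)$ is bounded for $\zeta\in AR_c$ with $|\zeta_1|$ sufficiently small. *)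

theory Defs
  imports Complex_Main
begin

text \<open>Points of C^d are functions nat => complex; only coordinates 0..d-1 matter
  (coordinate i corresponds to z_(i+1) of the paper). Multi-indices are nat => nat.\<close>

definition mpoly :: "nat \<Rightarrow> ((nat \<Rightarrow> nat) \<Rightarrow> complex) \<Rightarrow> bool" where
  "mpoly d c \<longleftrightarrow> finite {\<alpha>. c \<alpha> \<noteq> 0} \<and> (\<forall>\<alpha>. c \<alpha> \<noteq> 0 \<longrightarrow> (\<forall>i\<ge>d. \<alpha> i = 0))"

definition mpeval :: "nat \<Rightarrow> ((nat \<Rightarrow> nat) \<Rightarrow> complex) \<Rightarrow> (nat \<Rightarrow> complex) \<Rightarrow> complex" where
  "mpeval d c z = (\<Sum>\<alpha>\<in>{\<alpha>. c \<alpha> \<noteq> 0}. c \<alpha> * (\<Prod>i<d. z i ^ \<alpha> i))"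

definition mdeg :: "nat \<Rightarrow> (nat \<Rightarrow> nat) \<Rightarrow> nat" where
  "mdeg d \<alpha> = (\<Sum>i<d. \<alpha> i)"

definition vanishes_to_order :: "nat \<Rightarrow> ((nat \<Rightarrow> nat) \<Rightarrow> complex) \<Rightarrow> (nat \<Rightarrow> complex) \<Rightarrow> nat \<Rightarrow> bool" where
  "vanishes_to_order d c u M \<longleftrightarrow>
     (\<exists>b. mpoly d b \<and> (\<forall>\<zeta>. mpeval d c (\<lambda>i. u i - \<zeta> i) = mpeval d b \<zeta>)
          \<and> (\<forall>\<beta>. mdeg d \<beta> < M \<longrightarrow> b \<beta> = 0) \<and> (\<exists>\<beta>. mdeg d \<beta> = M \<and> b \<beta> \<noteq> 0))"

text \<open>Vanishes to order at least M (every homogeneous term of degree < M is zero;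
  this includes the zero polynomial).\<close>
definition vanishes_to_order_ge :: "nat \<Rightarrow> ((nat \<Rightarrow> nat) \<Rightarrow> complex) \<Rightarrow> (nat \<Rightarrow> complex) \<Rightarrow> nat \<Rightarrow> bool" where
  "vanishes_to_order_ge d c u M \<longleftrightarrow>
     (\<exists>b. mpoly d b \<and> (\<forall>\<zeta>. mpeval d c (\<lambda>i. u i - \<zeta> i) = mpeval d b \<zeta>)
          \<and> (\<forall>\<beta>. mdeg d \<beta> < M \<longrightarrow> b \<beta> = 0))"

definition polydisc :: "nat \<Rightarrow> (nat \<Rightarrow> complex) set" where
  "polydisc d = {z. \<forall>i<d. cmod (z i) < 1}"

definition Dset :: "nat \<Rightarrow> (nat \<Rightarrow> complex) \<Rightarrow> real set" where
  "Dset d \<zeta> = (\<lambda>i. cmod (\<zeta> i)) ` {..<d} \<union> (\<lambda>i. Re (\<zeta> i)) ` {..<d}"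

definition AR :: "nat \<Rightarrow> real \<Rightarrow> (nat \<Rightarrow> complex) set" where
  "AR d c = {\<zeta>. (\<forall>i<d. 0 < Re (\<zeta> i)) \<and>
                 (\<forall>x\<in>Dset d \<zeta>. \<forall>y\<in>Dset d \<zeta>. 1 / c \<le> x / y \<and> x / y \<le> c)}"

definition nt_bounded :: "nat \<Rightarrow> ((nat \<Rightarrow> complex) \<Rightarrow> complex) \<Rightarrow> (nat \<Rightarrow> complex) \<Rightarrow> bool" where
  "nt_bounded d f u \<longleftrightarrow>
     (\<forall>c>1. \<exists>\<delta>>0. \<exists>B. \<forall>\<zeta>\<in>AR d c. cmod (\<zeta> 0) < \<delta> \<longrightarrow> cmod (f (\<lambda>i. u i - \<zeta> i)) \<le> B)"

end

theory Submission
  imports Defs "HOL-Complex_Analysis.Complex_Analysis" "HOL-Computational_Algebra.Polynomial"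
begin

definition mmon :: "nat \<Rightarrow> (nat \<Rightarrow> nat) \<Rightarrow> (nat \<Rightarrow> complex) \<Rightarrow> complex" where
  "mmon d \<alpha> z = (\<Prod>i<d. z i ^ \<alpha> i)"

lemma mpeval_mmon: "mpeval d c z = (\<Sum>\<alpha>\<in>{\<alpha>. c \<alpha> \<noteq> 0}. c \<alpha> * mmon d \<alpha> z)"
  by (simp add: mpeval_def mmon_def)

lemma mpeval_superset:
  assumes "finite T" "{\<alpha>. c \<alpha> \<noteq> 0} \<subseteq> T"
  shows "mpeval d c z = (\<Sum>\<alpha>\<in>T. c \<alpha> * mmon d \<alpha> z)"
  unfolding mpeval_mmon
  by (rule sum.mono_neutral_left) (use assms in auto)

lemma mpeval_cong:
  assumes "\<And>i. i < d \<Longrightarrow> z i = z' i"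
  shows "mpeval d c z = mpeval d c z'"
  unfolding mpeval_def using assms by (intro sum.cong prod.cong) auto

definition rep :: "nat \<Rightarrow> ((nat \<Rightarrow> complex) \<Rightarrow> complex) \<Rightarrow> bool" where
  "rep d F \<longleftrightarrow> (\<exists>b. mpoly d b \<and> (\<forall>z. F z = mpeval d b z))"

lemma rep_const: "rep d (\<lambda>z. k)"
proof -
  let ?b = "\<lambda>\<alpha>::nat\<Rightarrow>nat. if \<alpha> = (\<lambda>_. 0) then k else 0"
  have "mpoly d ?b" unfolding mpoly_def
    by (rule conjI, rule finite_subset[of _ "{\<lambda>_. 0}"]) auto
  moreover have "mpeval d ?b z = k" for z
    by (subst mpeval_superset[of "{\<lambda>_. 0}"]) (auto simp: mmon_def)
  ultimately show ?thesis unfolding rep_def by metis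
qed

lemma rep_add:
  assumes "rep d F" "rep d G" shows "rep d (\<lambda>z. F z + G z)"
proof -
  obtain b1 b2 where b: "mpoly d b1" "mpoly d b2" "\<forall>z. F z = mpeval d b1 z" "\<forall>z. G z = mpeval d b2 z"
    using assms unfolding rep_def by blast
  let ?T = "{\<alpha>. b1 \<alpha> \<noteq> 0} \<union> {\<alpha>. b2 \<alpha> \<noteq> 0}"
  have fin: "finite ?T" using b unfolding mpoly_def by auto
  have "mpoly d (\<lambda>\<alpha>. b1 \<alpha> + b2 \<alpha>)" unfolding mpoly_def
  proof
    show "finite {\<alpha>. b1 \<alpha> + b2 \<alpha> \<noteq> 0}" by (rule finite_subset[OF _ fin]) auto
    show "\<forall>\<alpha>. b1 \<alpha> + b2 \<alpha> \<noteq> 0 \<longrightarrow> (\<forall>i\<ge>d. \<alpha> i = 0)"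
    proof (intro allI impI)
      fix \<alpha> i assume "b1 \<alpha> + b2 \<alpha> \<noteq> 0" "d \<le> i"
      then have "b1 \<alpha> \<noteq> 0 \<or> b2 \<alpha> \<noteq> 0" by auto
      then show "\<alpha> i = 0" using b(1,2) \<open>d \<le> i\<close> unfolding mpoly_def by blast
    qed
  qed
  moreover have "F z + G z = mpeval d (\<lambda>\<alpha>. b1 \<alpha> + b2 \<alpha>) z" for z
  proof -
    have "mpeval d (\<lambda>\<alpha>. b1 \<alpha> + b2 \<alpha>) z = (\<Sum>\<alpha>\<in>?T. (b1 \<alpha> + b2 \<alpha>) * mmon d \<alpha> z)"
      by (rule mpeval_superset[OF fin]) auto
    moreover have "mpeval d b1 z = (\<Sum>\<alpha>\<in>?T. b1 \<alpha> * mmon d \<alpha> z)"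
      by (rule mpeval_superset[OF fin]) auto
    moreover have "mpeval d b2 z = (\<Sum>\<alpha>\<in>?T. b2 \<alpha> * mmon d \<alpha> z)"
      by (rule mpeval_superset[OF fin]) auto
    ultimately show ?thesis using b(3,4) by (simp add: sum.distrib distrib_right)
  qed
  ultimately show ?thesis unfolding rep_def by blast
qed

lemma rep_scale:
  assumes "rep d F" shows "rep d (\<lambda>z. k * F z)"
proof -
  obtain b where b: "mpoly d b" "\<forall>z. F z = mpeval d b z"
    using assms unfolding rep_def by blast
  have fin: "finite {\<alpha>. b \<alpha> \<noteq> 0}" using b unfolding mpoly_def by auto
  have "mpoly d (\<lambda>\<alpha>. k * b \<alpha>)" using b(1) fin
    by (auto simp: mpoly_def intro: finite_subset[OF _ fin])
  moreover have "k * F z = mpeval d (\<lambda>\<alpha>. k * b \<alpha>) z" for z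
  proof -
    have "mpeval d (\<lambda>\<alpha>. k * b \<alpha>) z = (\<Sum>\<alpha>\<in>{\<alpha>. b \<alpha> \<noteq> 0}. k * b \<alpha> * mmon d \<alpha> z)"
      by (rule mpeval_superset[OF fin]) auto
    then show ?thesis using b(2) unfolding mpeval_mmon by (simp add: sum_distrib_left mult.assoc)
  qed
  ultimately show ?thesis unfolding rep_def by blast
qed

lemma rep_sum:
  assumes "finite S" "\<And>s. s \<in> S \<Longrightarrow> rep d (F s)" shows "rep d (\<lambda>z. \<Sum>s\<in>S. F s z)"
  using assms by (induction S rule: finite_induct) (auto intro: rep_add rep_const)

lemma rep_var_mult:
  assumes "rep d F" "j < d" shows "rep d (\<lambda>z. z j * F z)"
proof -
  obtain b where b: "mpoly d b" "\<forall>z. F z = mpeval d b z"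
    using assms unfolding rep_def by blast
  define S where "S = {\<alpha>. b \<alpha> \<noteq> 0}"
  have fin: "finite S" using b unfolding mpoly_def S_def by auto
  define sh where "sh = (\<lambda>\<alpha>::nat\<Rightarrow>nat. \<alpha>(j := Suc (\<alpha> j)))"
  define b' where "b' = (\<lambda>\<beta>. if 0 < \<beta> j then b (\<beta>(j := \<beta> j - 1)) else 0)"
  have inj: "inj sh" unfolding sh_def inj_def
    by (metis Suc_inject fun_upd_apply fun_upd_idem_iff fun_upd_upd)
  have b'sh: "b' (sh \<alpha>) = b \<alpha>" for \<alpha> unfolding b'_def sh_def by auto
  have supp: "{\<beta>. b' \<beta> \<noteq> 0} = sh ` S"
  proof safe
    fix \<beta> assume "b' \<beta> \<noteq> 0"
    then have "0 < \<beta> j" "b (\<beta>(j := \<beta> j - 1)) \<noteq> 0" unfolding b'_def by (auto split: if_splits)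
    then show "\<beta> \<in> sh ` S" unfolding S_def sh_def
      by (intro image_eqI[of _ _ "\<beta>(j := \<beta> j - 1)"]) auto
  qed (auto simp: b'sh S_def)
  have "mpoly d b'" unfolding mpoly_def
  proof
    show "finite {\<alpha>. b' \<alpha> \<noteq> 0}" using supp fin by simp
    show "\<forall>\<alpha>. b' \<alpha> \<noteq> 0 \<longrightarrow> (\<forall>i\<ge>d. \<alpha> i = 0)"
    proof (intro allI impI)
      fix \<beta> i assume "b' \<beta> \<noteq> 0" "d \<le> i"
      then have "\<beta> \<in> sh ` S" using supp by blast
      then obtain \<alpha> where "\<alpha> \<in> S" "\<beta> = sh \<alpha>" by blast
      then show "\<beta> i = 0" using b(1) assms(2) \<open>d \<le> i\<close> unfolding S_def sh_def mpoly_def by auto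
    qed
  qed
  moreover have "z j * F z = mpeval d b' z" for z
  proof -
    have mm: "mmon d (sh \<alpha>) z = z j * mmon d \<alpha> z" for \<alpha>
    proof -
      have "mmon d (sh \<alpha>) z = (\<Prod>i\<in>insert j ({..<d} - {j}). z i ^ sh \<alpha> i)"
        unfolding mmon_def using assms(2) by (intro prod.cong) auto
      also have "\<dots> = z j ^ Suc (\<alpha> j) * (\<Prod>i\<in>{..<d} - {j}. z i ^ \<alpha> i)"
        by (subst prod.insert) (auto simp: sh_def intro!: prod.cong)
      also have "\<dots> = z j * (z j ^ \<alpha> j * (\<Prod>i\<in>{..<d} - {j}. z i ^ \<alpha> i))" by simp
      also have "z j ^ \<alpha> j * (\<Prod>i\<in>{..<d} - {j}. z i ^ \<alpha> i) = mmon d \<alpha> z"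
        unfolding mmon_def using assms(2)
        by (subst prod.remove[of _ j]) auto
      finally show ?thesis .
    qed
    have "mpeval d b' z = (\<Sum>\<beta>\<in>sh ` S. b' \<beta> * mmon d \<beta> z)"
      unfolding mpeval_mmon supp ..
    also have "\<dots> = (\<Sum>\<alpha>\<in>S. b \<alpha> * (z j * mmon d \<alpha> z))"
      by (subst sum.reindex) (use inj in \<open>auto simp: b'sh mm inj_on_def\<close>)
    also have "\<dots> = z j * F z" using b(2) unfolding mpeval_mmon S_def
      by (simp add: sum_distrib_left algebra_simps)
    finally show ?thesis by simp
  qed
  ultimately show ?thesis unfolding rep_def by blast
qed

lemma rep_mult_lin:
  assumes "rep d F" "j < d" shows "rep d (\<lambda>z. F z * (1 - z j))"
proof -
  have "rep d (\<lambda>z. F z + (-1) * (z j * F z))"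
    by (intro rep_add rep_scale rep_var_mult assms)
  then show ?thesis by (simp add: algebra_simps)
qed

lemma rep_prod_shift:
  assumes "k \<le> d" shows "rep d (\<lambda>z. \<Prod>i<k. (1 - z i) ^ \<alpha> i)"
  using assms
proof (induction k)
  case 0 then show ?case using rep_const[of d 1] by simp
next
  case (Suc k)
  have "rep d (\<lambda>z. (\<Prod>i<k. (1 - z i) ^ \<alpha> i) * (1 - z k) ^ n)" for n
  proof (induction n)
    case 0 then show ?case using Suc by simp
  next
    case (Suc n)
    from rep_mult_lin[OF this, of k] \<open>Suc k \<le> d\<close> show ?case by (simp add: algebra_simps)
  qed
  then show ?case by simp
qed

lemma shift_exists:
  assumes "mpoly d q"
  shows "\<exists>b. mpoly d b \<and> (\<forall>\<zeta>. mpeval d q (\<lambda>i. 1 - \<zeta> i) = mpeval d b \<zeta>)"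
proof -
  have fin: "finite {\<alpha>. q \<alpha> \<noteq> 0}" using assms unfolding mpoly_def by auto
  have "rep d (\<lambda>\<zeta>. \<Sum>\<alpha>\<in>{\<alpha>. q \<alpha> \<noteq> 0}. q \<alpha> * (\<Prod>i<d. (1 - \<zeta> i) ^ \<alpha> i))"
    by (intro rep_sum fin rep_scale rep_prod_shift) auto
  then show ?thesis unfolding rep_def mpeval_def by auto
qed

definition restr :: "nat \<Rightarrow> nat \<Rightarrow> ((nat \<Rightarrow> nat) \<Rightarrow> complex) \<Rightarrow> ((nat \<Rightarrow> nat) \<Rightarrow> complex)" where
  "restr d k b = (\<lambda>\<alpha>. if mdeg d \<alpha> = k then b \<alpha> else 0)"

definition cbound :: "nat \<Rightarrow> ((nat \<Rightarrow> nat) \<Rightarrow> complex) \<Rightarrow> real \<Rightarrow> real" where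
  "cbound d b K = (\<Sum>\<alpha>\<in>{\<alpha>. b \<alpha> \<noteq> 0}. cmod (b \<alpha>) * K ^ mdeg d \<alpha>)"

lemma mpoly_restr: "mpoly d b \<Longrightarrow> mpoly d (restr d k b)"
  unfolding mpoly_def restr_def by (auto intro: finite_subset)

lemma mmon_scale: "mmon d \<alpha> (\<lambda>i. t * w i) = t ^ mdeg d \<alpha> * mmon d \<alpha> w"
  unfolding mmon_def mdeg_def by (simp add: power_mult_distrib prod.distrib power_sum)

lemma mmon_bound:
  assumes "\<And>i. i < d \<Longrightarrow> cmod (w i) \<le> K"
  shows "cmod (mmon d \<alpha> w) \<le> K ^ mdeg d \<alpha>"
proof -
  have "cmod (mmon d \<alpha> w) = (\<Prod>i<d. cmod (w i) ^ \<alpha> i)"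
    unfolding mmon_def by (simp add: prod_norm[symmetric] norm_power)
  also have "\<dots> \<le> (\<Prod>i<d. K ^ \<alpha> i)"
    by (intro prod_mono conjI power_mono assms) auto
  also have "\<dots> = K ^ mdeg d \<alpha>" unfolding mdeg_def by (simp add: power_sum)
  finally show ?thesis .
qed

lemma remainder_bound:
  assumes b: "mpoly d b" and van: "\<forall>\<beta>. mdeg d \<beta> < M \<longrightarrow> b \<beta> = 0"
    and t: "cmod t \<le> 1" and w: "\<And>i. i < d \<Longrightarrow> cmod (w i) \<le> K" and K: "1 \<le> K"
  shows "cmod (mpeval d b (\<lambda>i. t * w i) - t ^ M * mpeval d (restr d M b) w) \<le> cmod t ^ (M+1) * cbound d b K"
proof -
  define S where "S = {\<alpha>. b \<alpha> \<noteq> 0}"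
  have fin: "finite S" using b unfolding mpoly_def S_def by auto
  have e1: "mpeval d (restr d M b) w = (\<Sum>\<alpha>\<in>S. restr d M b \<alpha> * mmon d \<alpha> w)"
    by (rule mpeval_superset[OF fin]) (auto simp: S_def restr_def)
  have "mpeval d b (\<lambda>i. t * w i) - t ^ M * mpeval d (restr d M b) w
      = (\<Sum>\<alpha>\<in>S. b \<alpha> * (t ^ mdeg d \<alpha> * mmon d \<alpha> w) - t ^ M * (restr d M b \<alpha> * mmon d \<alpha> w))"
    by (subst e1, unfold mpeval_mmon S_def[symmetric] mmon_scale) (simp add: sum_subtractf sum_distrib_left)
  also have "\<dots> = (\<Sum>\<alpha>\<in>S. (if mdeg d \<alpha> = M then 0 else b \<alpha> * t ^ mdeg d \<alpha> * mmon d \<alpha> w))"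
    by (rule sum.cong) (auto simp: restr_def)
  also have "cmod \<dots> \<le> (\<Sum>\<alpha>\<in>S. cmod (if mdeg d \<alpha> = M then 0 else b \<alpha> * t ^ mdeg d \<alpha> * mmon d \<alpha> w))"
    by (rule norm_sum)
  also have "\<dots> \<le> (\<Sum>\<alpha>\<in>S. cmod t ^ (M+1) * (cmod (b \<alpha>) * K ^ mdeg d \<alpha>))"
  proof (rule sum_mono)
    fix \<alpha> assume "\<alpha> \<in> S"
    show "cmod (if mdeg d \<alpha> = M then 0 else b \<alpha> * t ^ mdeg d \<alpha> * mmon d \<alpha> w)
          \<le> cmod t ^ (M+1) * (cmod (b \<alpha>) * K ^ mdeg d \<alpha>)"
    proof (cases "mdeg d \<alpha> = M")
      case True then show ?thesis using K by simp
    next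
      case False
      with van \<open>\<alpha> \<in> S\<close> have "M + 1 \<le> mdeg d \<alpha>" unfolding S_def
        by (metis Suc_eq_plus1 Suc_leI linorder_neqE_nat mem_Collect_eq)
      then have tt: "cmod t ^ mdeg d \<alpha> \<le> cmod t ^ (M+1)"
        using t by (intro power_decreasing) auto
      have "cmod (b \<alpha> * t ^ mdeg d \<alpha> * mmon d \<alpha> w) = cmod (b \<alpha>) * cmod t ^ mdeg d \<alpha> * cmod (mmon d \<alpha> w)"
        by (simp add: norm_mult norm_power)
      also have "\<dots> \<le> cmod (b \<alpha>) * cmod t ^ (M+1) * K ^ mdeg d \<alpha>"
        by (intro mult_mono mmon_bound w tt) auto
      finally show ?thesis using False by (simp add: algebra_simps)
    qed
  qed
  also have "\<dots> = cmod t ^ (M+1) * cbound d b K"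
    unfolding cbound_def S_def by (simp add: sum_distrib_left)
  finally show ?thesis .
qed

lemma upper_bound:
  assumes b: "mpoly d b" and van: "\<forall>\<beta>. mdeg d \<beta> < M \<longrightarrow> b \<beta> = 0"
    and t: "cmod t \<le> 1" and w: "\<And>i. i < d \<Longrightarrow> cmod (w i) \<le> K" and K: "1 \<le> K"
  shows "cmod (mpeval d b (\<lambda>i. t * w i)) \<le> cmod t ^ M * cbound d b K"
proof -
  have "cmod (mpeval d b (\<lambda>i. t * w i)) \<le> (\<Sum>\<alpha>\<in>{\<alpha>. b \<alpha> \<noteq> 0}. cmod (b \<alpha> * (t ^ mdeg d \<alpha> * mmon d \<alpha> w)))"
    unfolding mpeval_mmon mmon_scale by (rule norm_sum)
  also have "\<dots> \<le> (\<Sum>\<alpha>\<in>{\<alpha>. b \<alpha> \<noteq> 0}. cmod t ^ M * (cmod (b \<alpha>) * K ^ mdeg d \<alpha>))"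
  proof (rule sum_mono)
    fix \<alpha> assume "\<alpha> \<in> {\<alpha>. b \<alpha> \<noteq> 0}"
    with van have "M \<le> mdeg d \<alpha>" by (metis mem_Collect_eq not_le)
    then have tt: "cmod t ^ mdeg d \<alpha> \<le> cmod t ^ M"
      using t by (intro power_decreasing) auto
    have "cmod (b \<alpha> * (t ^ mdeg d \<alpha> * mmon d \<alpha> w)) = cmod (b \<alpha>) * cmod t ^ mdeg d \<alpha> * cmod (mmon d \<alpha> w)"
      by (simp add: norm_mult norm_power)
    also have "\<dots> \<le> cmod (b \<alpha>) * cmod t ^ M * K ^ mdeg d \<alpha>"
      by (intro mult_mono mmon_bound w tt) auto
    finally show "cmod (b \<alpha> * (t ^ mdeg d \<alpha> * mmon d \<alpha> w)) \<le> cmod t ^ M * (cmod (b \<alpha>) * K ^ mdeg d \<alpha>)"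
      by (simp add: algebra_simps)
  qed
  also have "\<dots> = cmod t ^ M * cbound d b K"
    unfolding cbound_def by (simp add: sum_distrib_left)
  finally show ?thesis .
qed

lemma cbound_nonneg: "0 \<le> K \<Longrightarrow> 0 \<le> cbound d b K"
  unfolding cbound_def by (intro sum_nonneg) auto

(* Kronecker substitution *)
lemma digits_lt:
  fixes N :: nat
  assumes "\<forall>i<n. a i < N" shows "(\<Sum>i<n. a i * N ^ i) < N ^ n"
  using assms
proof (induction n)
  case 0 then show ?case by simp
next
  case (Suc n)
  then have "(\<Sum>i<n. a i * N ^ i) < N ^ n" "a n < N" by auto
  then have "(\<Sum>i<Suc n. a i * N ^ i) < N ^ n + a n * N ^ n" by simp
  also have "\<dots> = (a n + 1) * N ^ n" by simp
  also have "\<dots> \<le> N * N ^ n" using \<open>a n < N\<close> by (intro mult_right_mono) auto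
  finally show ?case by simp
qed

lemma digits_inj:
  fixes N :: nat
  assumes "\<forall>i<n. a i < N" "\<forall>i<n. b i < N" "(\<Sum>i<n. a i * N ^ i) = (\<Sum>i<n. b i * N ^ i)"
  shows "\<forall>i<n. a i = b i"
  using assms
proof (induction n)
  case 0 then show ?case by simp
next
  case (Suc n)
  define sa where "sa = (\<Sum>i<n. a i * N ^ i)"
  define sb where "sb = (\<Sum>i<n. b i * N ^ i)"
  have la: "sa < N ^ n" unfolding sa_def using Suc.prems by (intro digits_lt) auto
  have lb: "sb < N ^ n" unfolding sb_def using Suc.prems by (intro digits_lt) auto
  have eq: "sa + a n * N ^ n = sb + b n * N ^ n" using Suc.prems(3) by (simp add: sa_def sb_def)
  have pos: "0 < N ^ n" by (rule le_less_trans[OF _ la]) simp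
  have "(sa + a n * N ^ n) div N ^ n = a n"
    using div_mult_self1[of "N ^ n" sa "a n"] pos la by (simp add: div_less)
  moreover have "(sb + b n * N ^ n) div N ^ n = b n"
    using div_mult_self1[of "N ^ n" sb "b n"] pos lb by (simp add: div_less)
  ultimately have an: "a n = b n" using eq by simp
  have "sa = sb" using eq an by (simp only: add_right_cancel)
  have p1: "\<forall>i<n. a i < N" "\<forall>i<n. b i < N" using Suc.prems(1,2) by auto
  have "\<forall>i<n. a i = b i" using Suc.IH[OF p1 \<open>sa = sb\<close>[unfolded sa_def sb_def]] .
  with an show ?case using less_Suc_eq by blast
qed

lemma kron:
  assumes c: "mpoly d c" and a0: "c \<alpha>0 \<noteq> 0"
  shows "\<exists>w. (\<forall>i. w i \<in> \<real> \<and> 0 < Re (w i)) \<and> mpeval d c w \<noteq> 0"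
proof -
  define S where "S = {\<alpha>. c \<alpha> \<noteq> 0}"
  have fin: "finite S" using c unfolding mpoly_def S_def by auto
  have a0S: "\<alpha>0 \<in> S" using a0 S_def by auto
  define N where "N = Suc (Max ({0} \<union> (\<lambda>(\<alpha>,i). \<alpha> i) ` (S \<times> {..<d})))"
  have finN: "finite ({0} \<union> (\<lambda>(\<alpha>,i). \<alpha> i) ` (S \<times> {..<d}))" using fin by auto
  have Nb: "\<alpha> i < N" if "\<alpha> \<in> S" "i < d" for \<alpha> i
  proof -
    have "\<alpha> i \<in> {0} \<union> (\<lambda>(\<alpha>,i). \<alpha> i) ` (S \<times> {..<d})" using that by force
    then show ?thesis unfolding N_def using Max_ge[OF finN] by (meson le_imp_less_Suc)
  qed
  define E where "E = (\<lambda>\<alpha>. \<Sum>i<d. \<alpha> i * N ^ i)"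
  have Einj: "inj_on E S"
  proof (rule inj_onI)
    fix \<alpha> \<beta> assume ab: "\<alpha> \<in> S" "\<beta> \<in> S" "E \<alpha> = E \<beta>"
    have "\<forall>i<d. \<alpha> i = \<beta> i" using ab Nb unfolding E_def by (intro digits_inj) auto
    moreover have "\<forall>i\<ge>d. \<alpha> i = 0 \<and> \<beta> i = 0" using c ab unfolding mpoly_def S_def by auto
    ultimately show "\<alpha> = \<beta>" by (metis ext not_le)
  qed
  define P where "P = (\<Sum>\<alpha>\<in>S. monom (c \<alpha>) (E \<alpha>))"
  have mm: "mmon d \<alpha> (\<lambda>i. y ^ (N ^ i)) = y ^ E \<alpha>" for \<alpha> and y :: complex
    unfolding mmon_def E_def by (simp add: power_mult[symmetric] power_sum mult.commute)
  have evP: "mpeval d c (\<lambda>i. y ^ (N ^ i)) = poly P y" for y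
    unfolding mpeval_mmon S_def[symmetric] P_def mm by (simp add: poly_sum poly_monom)
  have "coeff P (E \<alpha>0) = (\<Sum>\<alpha>\<in>S. if E \<alpha> = E \<alpha>0 then c \<alpha> else 0)"
    unfolding P_def by (simp add: coeff_sum coeff_monom eq_commute)
  also have "\<dots> = (\<Sum>\<alpha>\<in>S. if \<alpha> = \<alpha>0 then c \<alpha> else 0)"
    using Einj a0S by (intro sum.cong) (auto simp: inj_on_def)
  also have "\<dots> = c \<alpha>0" using fin a0S by simp
  finally have "P \<noteq> 0" using a0 by auto
  then have "finite {y. poly P y = 0}" by (rule poly_roots_finite)
  then have finR: "finite {x::real. poly P (of_real x) = 0}"
  proof -
    assume f: "finite {y. poly P y = 0}"
    have "{x::real. poly P (of_real x) = 0} = of_real -` {y. poly P y = 0}" by auto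
    also have "finite \<dots>" by (rule finite_vimageI[OF f]) (auto simp: inj_on_def)
    finally show ?thesis .
  qed
  define x where "x = Max (insert 0 {x::real. poly P (of_real x) = 0}) + 1"
  have x0: "0 < x" using finR unfolding x_def by (smt (verit) Max_ge finite_insert insertI1)
  have xR: "poly P (of_real x) \<noteq> 0"
  proof
    assume "poly P (of_real x) = 0"
    then have "x \<le> Max (insert 0 {x::real. poly P (of_real x) = 0})" using finR by (intro Max_ge) auto
    then show False unfolding x_def by simp
  qed
  define w where "w = (\<lambda>i. (complex_of_real x) ^ (N ^ i))"
  have "\<forall>i. w i \<in> \<real> \<and> 0 < Re (w i)"
    using x0 unfolding w_def by (auto simp flip: of_real_power)
  moreover have "mpeval d c w \<noteq> 0" unfolding w_def evP using xR .
  ultimately show ?thesis by blast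
qed

lemma disc_step:
  fixes t a A :: real and z :: complex
  assumes "0 < t" "0 < a" "a \<le> Re z" "cmod z \<le> A" "t * A^2 \<le> a"
  shows "cmod (1 - of_real t * z) < 1"
proof -
  have e: "(cmod z)^2 = (Re z)^2 + (Im z)^2" by (rule cmod_power2)
  have "(cmod (1 - of_real t * z))^2 = (1 - t * Re z)^2 + (t * Im z)^2"
    by (simp add: cmod_power2)
  also have "\<dots> = 1 - 2 * t * Re z + t^2 * (cmod z)^2"
    unfolding e by (simp add: power2_eq_square ring_distribs)
  finally have 1: "(cmod (1 - of_real t * z))^2 = 1 - 2 * t * Re z + t^2 * (cmod z)^2" .
  have 2: "t^2 * (cmod z)^2 \<le> t^2 * A^2"
    using assms by (intro mult_left_mono power_mono) auto
  have 3: "t^2 * A^2 \<le> t * a" using mult_left_mono[OF assms(5), of t] assms(1)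
    by (simp add: power2_eq_square mult.assoc)
  have 4: "t * a \<le> t * Re z" using assms by simp
  have "(cmod (1 - of_real t * z))^2 < 1" using 1 2 3 4 assms(1,2) mult_pos_pos[OF assms(1,2)] by linarith
  then show ?thesis by (metis abs_norm_cancel abs_square_less_1)
qed

lemma hom_nonzero:
  assumes b: "mpoly d b" and van: "\<forall>\<beta>. mdeg d \<beta> < M \<longrightarrow> b \<beta> = 0"
    and nz: "\<And>\<zeta>. (\<forall>i<d. cmod (1 - \<zeta> i) < 1) \<Longrightarrow> mpeval d b \<zeta> \<noteq> 0"
    and ex: "mdeg d \<beta>0 = M" "b \<beta>0 \<noteq> 0"
    and w0: "\<forall>i<d. 0 < Re (w0 i)"
  shows "mpeval d (restr d M b) w0 \<noteq> 0"
proof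
  assume H0: "mpeval d (restr d M b) w0 = 0"
  define H where "H = mpeval d (restr d M b)"
  have rb: "restr d M b \<beta>0 \<noteq> 0" using ex by (simp add: restr_def)
  obtain v' where v': "H v' \<noteq> 0"
    using kron[of d "restr d M b", OF mpoly_restr[OF b] rb] unfolding H_def by auto
  define z where "z = (\<lambda>s::complex. \<lambda>i. w0 i + s * (v' i - w0 i))"
  define a where "a = Min (insert 1 ((\<lambda>i. Re (w0 i) / 2) ` {..<d}))"
  define Dm where "Dm = Max (insert 1 ((\<lambda>i. cmod (v' i - w0 i)) ` {..<d}))"
  define A where "A = Max (insert 1 ((\<lambda>i. cmod (w0 i)) ` {..<d})) + a"
  have a0: "0 < a" unfolding a_def using w0 by (subst Min_gr_iff) auto
  have aw: "a \<le> Re (w0 i) / 2" if "i < d" for i unfolding a_def using that by (intro Min_le) auto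
  have Dm1: "1 \<le> Dm" unfolding Dm_def by (intro Max_ge) auto
  have Dmi: "cmod (v' i - w0 i) \<le> Dm" if "i < d" for i unfolding Dm_def using that by (intro Max_ge) auto
  have Am: "cmod (w0 i) + a \<le> A" if "i < d" for i unfolding A_def using that
    by (simp add: Max_ge)
  have A1: "1 \<le> A" unfolding A_def using a0 by (smt (verit) Max_ge finite_imageI finite_insert finite_lessThan insertI1)
  define r where "r = a / Dm"
  have r0: "0 < r" unfolding r_def using a0 Dm1 by simp
  have zb: "a \<le> Re (z s i) \<and> cmod (z s i) \<le> A" if "s \<in> ball 0 r" "i < d" for s i
  proof -
    have "cmod (s * (v' i - w0 i)) \<le> cmod s * Dm"
      using Dmi[OF that(2)] by (simp add: norm_mult mult_left_mono)
    also have "\<dots> \<le> r * Dm" using that(1) Dm1 by (intro mult_right_mono) auto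
    also have "\<dots> = a" unfolding r_def using Dm1 by simp
    finally have sm: "cmod (s * (v' i - w0 i)) \<le> a" .
    have "Re (w0 i) - a \<le> Re (z s i)" unfolding z_def using abs_Re_le_cmod[of "s * (v' i - w0 i)"] sm by auto
    moreover have "cmod (z s i) \<le> cmod (w0 i) + a" unfolding z_def using norm_triangle_ineq[of "w0 i" "s * (v' i - w0 i)"] sm by linarith
    ultimately show ?thesis using aw[OF that(2)] Am[OF that(2)] by linarith
  qed
  define T where "T = min 1 (a / A^2)"
  have T0: "0 < T" unfolding T_def using a0 A1 by simp
  have T1: "T \<le> 1" unfolding T_def by simp
  have TA: "T * A^2 \<le> a" unfolding T_def using A1 a0
    by (smt (verit) divide_pos_pos le_divide_eq min.cobounded2 zero_less_power)
  define tt where "tt = (\<lambda>n::nat. T / (real n + 1))"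
  have tt0: "0 < tt n" for n unfolding tt_def using T0 by simp
  have tt1: "tt n \<le> T" for n unfolding tt_def using T0 by (simp add: divide_le_eq)
  define F where "F = (\<lambda>n::nat. \<lambda>s. mpeval d b (\<lambda>i. of_real (tt n) * z s i) / of_real (tt n) ^ M)"
  define g where "g = (\<lambda>s. H (z s))"
  have "g 0 \<noteq> 0"
  proof (rule Hurwitz_no_zeros[of "ball 0 r" F g])
    show "open (ball (0::complex) r)" "connected (ball (0::complex) r)" by auto
    show "F n holomorphic_on ball 0 r" for n
      unfolding F_def z_def mpeval_def by (intro holomorphic_intros) auto
    show "g holomorphic_on ball 0 r"
      unfolding g_def H_def z_def mpeval_def by (intro holomorphic_intros)
    show "0 \<in> ball (0::complex) r" using r0 by simp
    show "F n s \<noteq> 0" if "s \<in> ball 0 r" for n s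
    proof -
      have "mpeval d b (\<lambda>i. of_real (tt n) * z s i) \<noteq> 0"
      proof (rule nz, intro allI impI)
        fix i assume "i < d"
        have "tt n * A^2 \<le> T * A^2" using tt1[of n] by (intro mult_right_mono) auto
        then show "cmod (1 - of_real (tt n) * z s i) < 1"
          using zb[OF that \<open>i < d\<close>] tt0[of n] a0 TA disc_step[of "tt n" a "z s i" A] by linarith
      qed
      then show ?thesis unfolding F_def using tt0[of n] by simp
    qed
    show "uniform_limit K F g sequentially" if "compact K" "K \<subseteq> ball 0 r" for K
    proof (rule uniform_limit_on_subset[OF _ that(2)])
      define C where "C = cbound d b A"
      have C0: "0 \<le> C" unfolding C_def using A1 by (intro cbound_nonneg) auto
      have bnd: "dist (F n s) (g s) \<le> tt n * C" if "s \<in> ball 0 r" for n s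
      proof -
        have tn: "cmod (of_real (tt n) :: complex) \<le> 1" using tt0[of n] tt1[of n] T1 by simp
        define X where "X = mpeval d b (\<lambda>i. of_real (tt n) * z s i) - of_real (tt n) ^ M * mpeval d (restr d M b) (z s)"
        have Xb: "cmod X \<le> cmod (of_real (tt n) :: complex) ^ (M+1) * C"
          unfolding C_def X_def using zb[OF that] A1 by (intro remainder_bound[OF b van tn]) auto
        have eq: "F n s - g s = X / of_real (tt n) ^ M"
          unfolding F_def g_def H_def X_def using tt0[of n] by (simp add: field_simps)
        have "cmod (F n s - g s) = cmod X / tt n ^ M" using tt0[of n] unfolding eq by (simp add: norm_divide norm_power)
        also have "\<dots> \<le> tt n * C" using Xb tt0[of n] by (simp add: pos_divide_le_eq mult_ac)
        finally show ?thesis by (simp add: dist_norm)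
      qed
      show "uniform_limit (ball 0 r) F g sequentially"
        unfolding uniform_limit_iff
      proof (intro allI impI)
        fix e :: real assume e: "0 < e"
        have "(\<lambda>n. T * C * inverse (real (Suc n))) \<longlonglongrightarrow> T * C * 0"
          by (intro tendsto_mult tendsto_const LIMSEQ_inverse_real_of_nat)
        then have "\<forall>\<^sub>F n in sequentially. T * C * inverse (real (Suc n)) < e"
          using e by (intro order_tendstoD) auto
        then show "\<forall>\<^sub>F n in sequentially. \<forall>s\<in>ball 0 r. dist (F n s) (g s) < e"
        proof (rule eventually_mono)
          fix n assume "T * C * inverse (real (Suc n)) < e"
          moreover have "tt n * C = T * C * inverse (real (Suc n))" unfolding tt_def by (simp add: field_simps)
          ultimately show "\<forall>s\<in>ball 0 r. dist (F n s) (g s) < e" using bnd[of _ n] by (metis order_le_less_trans)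
        qed
      qed
    qed
    show "\<not> g constant_on ball 0 r"
    proof
      assume gc: "g constant_on ball 0 r"
      have "g constant_on UNIV"
      proof (rule analytic_continuation'[OF _ open_UNIV connected_UNIV _ _ _ gc])
        show "g holomorphic_on UNIV" unfolding g_def H_def z_def mpeval_def by (intro holomorphic_intros)
        show "(0::complex) islimpt ball 0 r" using r0 by (intro interior_limit_point) auto
      qed auto
      then have "g 0 = g 1" unfolding constant_on_def by auto
      moreover have "g 0 = 0" unfolding g_def z_def H_def using H0 by simp
      moreover have "g 1 \<noteq> 0" unfolding g_def z_def using v' by simp
      ultimately show False by simp
    qed
  qed
  moreover have "g 0 = 0" unfolding g_def z_def H_def using H0 by simp
  ultimately show False by simp
qed

lemma cont_coord [continuous_intros]: "continuous_on S (\<lambda>x::nat \<Rightarrow> complex. x i)"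
  by (rule continuous_on_subset[OF continuous_on_product_coordinates]) auto

lemma compact_K:
  fixes c :: real
  defines "A \<equiv> {z::complex. cmod z \<le> c \<and> 1/c \<le> Re z}"
  shows "compact (PiE UNIV (\<lambda>i. if i < d then A else {0}))"
proof -
  have cA: "compact A"
  proof -
    have "A = cball 0 c \<inter> {z. Re z \<ge> 1/c}" unfolding A_def by auto
    then show ?thesis by (simp add: compact_Int_closed closed_halfspace_Re_ge)
  qed
  have "compactin (product_topology (\<lambda>i. euclidean) UNIV) (PiE UNIV (\<lambda>i. if i < d then A else {0}))"
    unfolding compactin_PiE using cA by auto
  then show ?thesis by (simp add: euclidean_product_topology)
qed

lemma hom_lower:
  assumes HM: "\<forall>w. (\<forall>i<d. 0 < Re (w i)) \<longrightarrow> mpeval d b w \<noteq> 0" and c: "1 < c"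
  shows "\<exists>m>0. \<forall>w. (\<forall>i<d. cmod (w i) \<le> c \<and> 1/c \<le> Re (w i)) \<longrightarrow> m \<le> cmod (mpeval d b w)"
proof -
  define A where "A = {z::complex. cmod z \<le> c \<and> 1/c \<le> Re z}"
  define K where "K = PiE UNIV (\<lambda>i. if i < d then A else {0})"
  have cK: "compact K" unfolding K_def A_def by (rule compact_K)
  have w1: "(\<lambda>i. if i < d then 1 else 0) \<in> K" unfolding K_def A_def using c by auto
  have cont: "continuous_on K (\<lambda>w. cmod (mpeval d b w))"
    unfolding mpeval_def by (intro continuous_intros)
  obtain wm where wm: "wm \<in> K" "\<forall>y\<in>K. cmod (mpeval d b wm) \<le> cmod (mpeval d b y)"
    using continuous_attains_inf[OF cK _ cont] w1 by blast
  have "\<forall>i<d. 0 < Re (wm i)"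
  proof (intro allI impI)
    fix i assume "i < d"
    have "wm i \<in> (if i < d then A else {0})" using wm(1) unfolding K_def PiE_iff by blast
    then have "wm i \<in> A" using \<open>i < d\<close> by simp
    then have "1/c \<le> Re (wm i)" unfolding A_def by auto
    moreover have "0 < 1/c" using c by simp
    ultimately show "0 < Re (wm i)" by linarith
  qed
  then have m0: "0 < cmod (mpeval d b wm)" using HM by auto
  show ?thesis
  proof (intro exI[of _ "cmod (mpeval d b wm)"] conjI m0 allI impI)
    fix w assume w: "\<forall>i<d. cmod (w i) \<le> c \<and> 1/c \<le> Re (w i)"
    define w' where "w' = (\<lambda>i. if i < d then w i else 0)"
    have "w' \<in> K" unfolding K_def A_def w'_def using w by (auto simp: PiE_iff)
    moreover have "mpeval d b w' = mpeval d b w" unfolding w'_def by (rule mpeval_cong) auto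
    ultimately show "cmod (mpeval d b wm) \<le> cmod (mpeval d b w)" using wm(2) by metis
  qed
qed

lemma dir_if:
  assumes d1: "1 \<le> d" and bp: "mpoly d bp" and vanp: "\<forall>\<beta>. mdeg d \<beta> < M \<longrightarrow> bp \<beta> = 0"
    and HM: "\<forall>w. (\<forall>i<d. 0 < Re (w i)) \<longrightarrow> mpeval d (restr d M bp) w \<noteq> 0"
    and bq: "mpoly d bq" and vanq: "\<forall>\<beta>. mdeg d \<beta> < M \<longrightarrow> bq \<beta> = 0"
    and c: "1 < c"
    and hl: "\<exists>m>0. \<forall>w. (\<forall>i<d. cmod (w i) \<le> c \<and> 1/c \<le> Re (w i)) \<longrightarrow> m \<le> cmod (mpeval d (restr d M bp) w)"
  shows "\<exists>\<delta>>0. \<exists>B. \<forall>\<zeta>\<in>Defs.AR d c. cmod (\<zeta> 0) < \<delta> \<longrightarrow> cmod (mpeval d bq \<zeta> / mpeval d bp \<zeta>) \<le> B"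
proof -
  obtain m where m0: "0 < m" and mb: "\<And>w. (\<forall>i<d. cmod (w i) \<le> c \<and> 1/c \<le> Re (w i)) \<Longrightarrow> m \<le> cmod (mpeval d (restr d M bp) w)"
    using hl by blast
  define Cp where "Cp = cbound d bp c"
  define Cq where "Cq = cbound d bq c"
  have Cp0: "0 \<le> Cp" unfolding Cp_def using c by (intro cbound_nonneg) auto
  have Cq0: "0 \<le> Cq" unfolding Cq_def using c by (intro cbound_nonneg) auto
  define \<delta> where "\<delta> = min 1 (m / (2 * Cp + 1))"
  have \<delta>0: "0 < \<delta>" unfolding \<delta>_def using m0 Cp0 by simp
  show ?thesis
  proof (rule exI[of _ \<delta>], rule conjI[OF \<delta>0], rule exI[of _ "2 * Cq / m"], intro ballI impI)
    fix \<zeta> assume \<zeta>: "\<zeta> \<in> Defs.AR d c" and small: "cmod (\<zeta> 0) < \<delta>"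
    define t where "t = cmod (\<zeta> 0)"
    have re0: "0 < Re (\<zeta> 0)" using \<zeta> d1 unfolding Defs.AR_def by auto
    have t0: "0 < t" unfolding t_def using re0 abs_Re_le_cmod[of "\<zeta> 0"] by linarith
    have t1: "t \<le> 1" using small \<delta>_def t_def by simp
    have tm: "t * (2 * Cp + 1) < m" using small \<delta>_def t_def m0 Cp0
      by (simp add: less_divide_eq)
    have rat: "1/c \<le> x / y \<and> x / y \<le> c" if "x \<in> Dset d \<zeta>" "y \<in> Dset d \<zeta>" for x y
      using \<zeta> that unfolding Defs.AR_def by blast
    have t_in: "t \<in> Dset d \<zeta>" unfolding t_def Dset_def using d1 by auto
    define w where "w = (\<lambda>i. if i < d then \<zeta> i / of_real t else 0)"
    have wK: "\<forall>i<d. cmod (w i) \<le> c \<and> 1/c \<le> Re (w i)"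
    proof (intro allI impI conjI)
      fix i assume i: "i < d"
      have "cmod (\<zeta> i) \<in> Dset d \<zeta>" "Re (\<zeta> i) \<in> Dset d \<zeta>" unfolding Dset_def using i by auto
      then have "cmod (\<zeta> i) / t \<le> c" "1/c \<le> Re (\<zeta> i) / t" using rat t_in by auto
      then show "cmod (w i) \<le> c" "1/c \<le> Re (w i)" unfolding w_def using i t0 by (auto simp: norm_divide)
    qed
    define tc where "tc = (of_real t :: complex)"
    have tcn: "cmod tc = t" unfolding tc_def using t0 by simp
    have eqw: "mpeval d b \<zeta> = mpeval d b (\<lambda>i. tc * w i)" for b
      by (rule mpeval_cong) (use t0 in \<open>auto simp: w_def tc_def\<close>)
    have Hm: "m \<le> cmod (mpeval d (restr d M bp) w)" by (rule mb[OF wK])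
    have rp: "cmod (mpeval d bp (\<lambda>i. tc * w i) - tc ^ M * mpeval d (restr d M bp) w) \<le> t ^ (M+1) * Cp"
      using remainder_bound[OF bp vanp, of tc w c] tcn t1 wK c unfolding Cp_def by auto
    have "cmod (tc ^ M * mpeval d (restr d M bp) w) \<ge> t ^ M * m"
      using Hm t0 tcn by (simp add: norm_mult norm_power mult_left_mono)
    then have "t ^ M * m - t ^ (M+1) * Cp \<le> cmod (mpeval d bp (\<lambda>i. tc * w i))"
      using rp norm_triangle_ineq2[of "tc ^ M * mpeval d (restr d M bp) w" "mpeval d bp (\<lambda>i. tc * w i)"]
      by (simp add: norm_minus_commute)
    moreover have "t ^ M * (m / 2) \<le> t ^ M * m - t ^ (M+1) * Cp"
    proof -
      have "t * Cp \<le> m / 2" using tm t0 by (simp add: algebra_simps)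
      then have "t ^ M * (t * Cp) \<le> t ^ M * (m / 2)" using t0 by (intro mult_left_mono) auto
      then show ?thesis by (simp add: algebra_simps)
    qed
    ultimately have lowp: "t ^ M * (m / 2) \<le> cmod (mpeval d bp \<zeta>)" unfolding eqw by linarith
    have upq: "cmod (mpeval d bq \<zeta>) \<le> t ^ M * Cq"
      unfolding eqw using upper_bound[OF bq vanq, of tc w c] tcn t1 wK c unfolding Cq_def by auto
    have pos: "0 < t ^ M * (m / 2)" using t0 m0 by simp
    have "cmod (mpeval d bq \<zeta>) \<le> (2 * Cq / m) * (t ^ M * (m / 2))" using upq m0 by (simp add: mult.commute)
    also have "\<dots> \<le> (2 * Cq / m) * cmod (mpeval d bp \<zeta>)"
      using lowp Cq0 m0 by (intro mult_left_mono) auto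
    finally have "cmod (mpeval d bq \<zeta>) \<le> (2 * Cq / m) * cmod (mpeval d bp \<zeta>)" .
    moreover have "0 < cmod (mpeval d bp \<zeta>)" using lowp pos by linarith
    ultimately show "cmod (mpeval d bq \<zeta> / mpeval d bp \<zeta>) \<le> 2 * Cq / m"
      by (simp add: norm_divide divide_le_eq)
  qed
qed

lemma dir_onlyif:
  assumes d1: "1 \<le> d" and bp: "mpoly d bp" and vanp: "\<forall>\<beta>. mdeg d \<beta> < M \<longrightarrow> bp \<beta> = 0"
    and HM: "\<forall>w. (\<forall>i<d. 0 < Re (w i)) \<longrightarrow> mpeval d (restr d M bp) w \<noteq> 0"
    and bq: "mpoly d bq" and \<beta>1: "mdeg d \<beta>1 < M" "bq \<beta>1 \<noteq> 0"
    and bnd: "\<forall>c>1. \<exists>\<delta>>0. \<exists>B. \<forall>\<zeta>\<in>Defs.AR d c. cmod (\<zeta> 0) < \<delta> \<longrightarrow> cmod (mpeval d bq \<zeta> / mpeval d bp \<zeta>) \<le> B"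
  shows False
proof -
  define k where "k = (LEAST k. \<exists>\<beta>. mdeg d \<beta> = k \<and> bq \<beta> \<noteq> 0)"
  have "\<exists>\<beta>. mdeg d \<beta> = k \<and> bq \<beta> \<noteq> 0" unfolding k_def by (rule LeastI[of _ "mdeg d \<beta>1"]) (use \<beta>1 in auto)
  then obtain \<beta>k where \<beta>k: "mdeg d \<beta>k = k" "bq \<beta>k \<noteq> 0" by blast
  have "k \<le> mdeg d \<beta>1" unfolding k_def by (rule Least_le) (use \<beta>1 in blast)
  then have kM: "k < M" using \<beta>1 by linarith
  have vanq: "\<forall>\<beta>. mdeg d \<beta> < k \<longrightarrow> bq \<beta> = 0"
    using not_less_Least[of _ "\<lambda>k. \<exists>\<beta>. mdeg d \<beta> = k \<and> bq \<beta> \<noteq> 0"] unfolding k_def by blast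
  have rb: "restr d k bq \<beta>k \<noteq> 0" using \<beta>k by (simp add: restr_def)
  obtain w where wR: "\<forall>i. w i \<in> \<real> \<and> 0 < Re (w i)" and Qw: "mpeval d (restr d k bq) w \<noteq> 0"
    using kron[of d "restr d k bq", OF mpoly_restr[OF bq] rb] by blast
  have Hw: "mpeval d (restr d M bp) w \<noteq> 0" using HM wR by auto
  have cw: "cmod (w i) = Re (w i)" for i
  proof -
    have "Im (w i) = 0" using wR complex_is_Real_iff by blast
    then show ?thesis using wR cmod_eq_Re by (metis abs_of_pos)
  qed
  define R where "R = (\<lambda>i. Re (w i)) ` {..<d}"
  have "0 \<in> {..<d}" using d1 by auto
  then have Rfin: "finite R" "R \<noteq> {}" unfolding R_def by auto
  define lo where "lo = Min R"
  define hi where "hi = Max R"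
  have lo0: "0 < lo" unfolding lo_def using Rfin wR by (subst Min_gr_iff) (auto simp: R_def)
  have lohi: "lo \<le> Re (w i) \<and> Re (w i) \<le> hi" if "i < d" for i
    unfolding lo_def hi_def using Rfin that by (auto simp: R_def)
  define c where "c = hi / lo + 1"
  have hilo: "lo \<le> hi" using lohi[of 0] d1 by auto
  have c1: "1 < c" unfolding c_def using lo0 hilo by simp
  have inAR: "(\<lambda>i. of_real t * w i) \<in> Defs.AR d c" if t0: "0 < t" for t
    unfolding Defs.AR_def
  proof (intro CollectI conjI allI impI ballI)
    fix i assume "i < d" then show "0 < Re (of_real t * w i)" using wR t0 by simp
  next
    have D: "Dset d (\<lambda>i. of_real t * w i) = (\<lambda>i. t * Re (w i)) ` {..<d}"
      unfolding Dset_def using t0 by (auto simp: norm_mult cw)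
    fix x y assume "x \<in> Dset d (\<lambda>i. of_real t * w i)" "y \<in> Dset d (\<lambda>i. of_real t * w i)"
    then obtain i j where ij: "i < d" "j < d" "x = t * Re (w i)" "y = t * Re (w j)" unfolding D by auto
    have xy: "x / y = Re (w i) / Re (w j)" using ij t0 by simp
    have a: "lo \<le> Re (w i)" "Re (w i) \<le> hi" "lo \<le> Re (w j)" "Re (w j) \<le> hi" using lohi ij by auto
    have "Re (w i) / Re (w j) \<le> hi / lo"
      using a lo0 by (intro frac_le) auto
    then show "x / y \<le> c" unfolding xy c_def by simp
    have "1 / c = lo / (hi + lo)" unfolding c_def using lo0 by (simp add: field_simps)
    also have "\<dots> \<le> lo / hi" using lo0 hilo by (intro divide_left_mono) auto
    also have "\<dots> \<le> Re (w i) / Re (w j)" using a lo0 by (intro frac_le) auto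
    finally show "1 / c \<le> x / y" unfolding xy .
  qed
  obtain \<delta> B where \<delta>0: "0 < \<delta>"
    and B: "\<And>\<zeta>. \<zeta> \<in> Defs.AR d c \<Longrightarrow> cmod (\<zeta> 0) < \<delta> \<Longrightarrow> cmod (mpeval d bq \<zeta> / mpeval d bp \<zeta>) \<le> B"
    using bnd c1 by blast
  define K0 where "K0 = Max (insert 1 ((\<lambda>i. cmod (w i)) ` {..<d}))"
  have K01: "1 \<le> K0" unfolding K0_def by (intro Max_ge) auto
  have K0w: "cmod (w i) \<le> K0" if "i < d" for i unfolding K0_def using that by (intro Max_ge) auto
  define Cq where "Cq = cbound d bq K0"
  define Cp where "Cp = cbound d bp K0"
  have Cp0: "0 \<le> Cp" unfolding Cp_def using K01 by (intro cbound_nonneg) auto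
  have Cq0: "0 \<le> Cq" unfolding Cq_def using K01 by (intro cbound_nonneg) auto
  define qv where "qv = cmod (mpeval d (restr d k bq) w)"
  define hv where "hv = cmod (mpeval d (restr d M bp) w)"
  have qv0: "0 < qv" unfolding qv_def using Qw by simp
  have hv0: "0 < hv" unfolding hv_def using Hw by simp
  define mn where "mn = min (min 1 (qv / (2 * Cq + 1))) (min (hv / (2 * Cp + 1)) (min (\<delta> / (K0 + 1)) ((qv / 2) / ((\<bar>B\<bar> + 1) * (hv + Cp)))))"
  define t where "t = mn / 2"
  have pos1: "0 < qv / (2 * Cq + 1)" "0 < hv / (2 * Cp + 1)" "0 < \<delta> / (K0 + 1)" "0 < (qv / 2) / ((\<bar>B\<bar> + 1) * (hv + Cp))"
    using qv0 hv0 Cq0 Cp0 \<delta>0 K01 by auto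
  have mn0: "0 < mn" unfolding mn_def using pos1 by simp
  have t0: "0 < t" unfolding t_def using mn0 by simp
  have tmn: "t < mn" unfolding t_def using mn0 by simp
  have t1: "t \<le> 1" using tmn unfolding mn_def by linarith
  have "t < qv / (2 * Cq + 1)" using tmn unfolding mn_def by linarith
  then have tq: "t * (2 * Cq + 1) < qv" using Cq0 by (simp add: pos_less_divide_eq)
  have "t < hv / (2 * Cp + 1)" using tmn unfolding mn_def by linarith
  then have tp: "t * (2 * Cp + 1) < hv" using Cp0 by (simp add: pos_less_divide_eq)
  have "t < \<delta> / (K0 + 1)" using tmn unfolding mn_def by linarith
  then have td: "t * (K0 + 1) < \<delta>" using K01 by (simp add: pos_less_divide_eq)
  have "t < (qv / 2) / ((\<bar>B\<bar> + 1) * (hv + Cp))" using tmn unfolding mn_def by linarith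
  moreover have "0 < (\<bar>B\<bar> + 1) * (hv + Cp)" using hv0 Cp0 by (intro mult_pos_pos) auto
  ultimately have tB: "t * ((\<bar>B\<bar> + 1) * (hv + Cp)) < qv / 2" by (simp add: pos_less_divide_eq)
  define tc where "tc = (of_real t :: complex)"
  have tcn: "cmod tc = t" unfolding tc_def using t0 by simp
  define \<zeta> where "\<zeta> = (\<lambda>i. tc * w i)"
  have \<zeta>AR: "\<zeta> \<in> Defs.AR d c" unfolding \<zeta>_def tc_def by (rule inAR[OF t0])
  have \<zeta>0: "cmod (\<zeta> 0) < \<delta>"
  proof -
    have "cmod (\<zeta> 0) = t * cmod (w 0)" unfolding \<zeta>_def using tcn by (simp add: norm_mult)
    also have "\<dots> \<le> t * K0" using K0w[of 0] d1 t0 by (intro mult_left_mono) auto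
    also have "\<dots> < \<delta>" using td t0 by (simp add: algebra_simps)
    finally show ?thesis .
  qed
  have wK: "\<And>i. i < d \<Longrightarrow> cmod (w i) \<le> K0" by (rule K0w)
  have rq: "cmod (mpeval d bq \<zeta> - tc ^ k * mpeval d (restr d k bq) w) \<le> t ^ (k+1) * Cq"
    unfolding \<zeta>_def using remainder_bound[OF bq vanq, of tc w K0] tcn t1 wK K01 unfolding Cq_def by auto
  have "cmod (tc ^ k * mpeval d (restr d k bq) w) = t ^ k * qv"
    unfolding qv_def using tcn by (simp add: norm_mult norm_power)
  then have "t ^ k * qv - t ^ (k+1) * Cq \<le> cmod (mpeval d bq \<zeta>)"
    using rq norm_triangle_ineq2[of "tc ^ k * mpeval d (restr d k bq) w" "mpeval d bq \<zeta>"]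
    by (simp add: norm_minus_commute)
  moreover have "t ^ k * (qv / 2) \<le> t ^ k * qv - t ^ (k+1) * Cq"
  proof -
    have "t * Cq \<le> qv / 2" using tq t0 by (simp add: algebra_simps)
    then have "t ^ k * (t * Cq) \<le> t ^ k * (qv / 2)" using t0 by (intro mult_left_mono) auto
    then show ?thesis by (simp add: algebra_simps)
  qed
  ultimately have lowq: "t ^ k * (qv / 2) \<le> cmod (mpeval d bq \<zeta>)" by linarith
  have rp: "cmod (mpeval d bp \<zeta> - tc ^ M * mpeval d (restr d M bp) w) \<le> t ^ (M+1) * Cp"
    unfolding \<zeta>_def using remainder_bound[OF bp vanp, of tc w K0] tcn t1 wK K01 unfolding Cp_def by auto
  have hn: "cmod (tc ^ M * mpeval d (restr d M bp) w) = t ^ M * hv"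
    unfolding hv_def using tcn by (simp add: norm_mult norm_power)
  have "t ^ M * hv - t ^ (M+1) * Cp \<le> cmod (mpeval d bp \<zeta>)"
    using rp hn norm_triangle_ineq2[of "tc ^ M * mpeval d (restr d M bp) w" "mpeval d bp \<zeta>"]
    by (simp add: norm_minus_commute)
  moreover have "t ^ (M+1) * Cp < t ^ M * hv"
  proof -
    have e: "t * (2 * Cp + 1) = t + 2 * (t * Cp)" by (simp add: algebra_simps)
    have "0 \<le> t * Cp" using t0 Cp0 by simp
    then have "t * Cp < hv" using tp t0 e by linarith
    then have "t ^ M * (t * Cp) < t ^ M * hv" using t0 by (intro mult_strict_left_mono) auto
    then show ?thesis by (simp add: algebra_simps)
  qed
  ultimately have P0: "0 < cmod (mpeval d bp \<zeta>)" by linarith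
  have "cmod (mpeval d bp \<zeta>) \<le> t ^ M * hv + t ^ (M+1) * Cp"
    using rp hn norm_triangle_ineq[of "mpeval d bp \<zeta> - tc ^ M * mpeval d (restr d M bp) w" "tc ^ M * mpeval d (restr d M bp) w"]
    by simp
  also have "\<dots> = t ^ M * (hv + t * Cp)" by (simp add: algebra_simps)
  also have "\<dots> \<le> t ^ M * (hv + Cp)" using t0 t1 Cp0
    by (intro mult_left_mono) (auto simp: mult_left_le_one_le)
  also have "t ^ M = t ^ k * t ^ (M - k)" using kM by (simp add: power_add[symmetric])
  also have "t ^ (M - k) \<le> t ^ 1" using t0 t1 kM by (intro power_decreasing) auto
  then have "t ^ k * t ^ (M - k) * (hv + Cp) \<le> t ^ k * t * (hv + Cp)"
    using t0 hv0 Cp0 by (intro mult_right_mono mult_left_mono) auto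
  finally have upp: "cmod (mpeval d bp \<zeta>) \<le> t ^ k * (t * (hv + Cp))" by (simp add: mult.assoc)
  have "B * cmod (mpeval d bp \<zeta>) \<le> \<bar>B\<bar> * cmod (mpeval d bp \<zeta>)" by (intro mult_right_mono) auto
  also have "\<dots> \<le> \<bar>B\<bar> * (t ^ k * (t * (hv + Cp)))" using upp by (intro mult_left_mono) auto
  also have "\<dots> = t ^ k * (\<bar>B\<bar> * (t * (hv + Cp)))" by (simp add: algebra_simps)
  also have "\<dots> < t ^ k * (qv / 2)"
  proof -
    have "\<bar>B\<bar> * (t * (hv + Cp)) < qv / 2"
    proof -
      have "\<bar>B\<bar> * (t * (hv + Cp)) \<le> (\<bar>B\<bar> + 1) * (t * (hv + Cp))"
        using t0 hv0 Cp0 by (intro mult_right_mono) auto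
      also have "\<dots> = t * ((\<bar>B\<bar> + 1) * (hv + Cp))" by (simp add: algebra_simps)
      finally show ?thesis using tB by linarith
    qed
    then show ?thesis using t0 by (intro mult_strict_left_mono) auto
  qed
  also have "\<dots> \<le> cmod (mpeval d bq \<zeta>)" by (rule lowq)
  finally have "B < cmod (mpeval d bq \<zeta>) / cmod (mpeval d bp \<zeta>)" using P0 by (simp add: less_divide_eq)
  moreover have "cmod (mpeval d bq \<zeta> / mpeval d bp \<zeta>) \<le> B" by (rule B[OF \<zeta>AR \<zeta>0])
  ultimately show False by (simp add: norm_divide)
qed

theorem proposition14p2:
  fixes d M :: nat and p q :: "(nat \<Rightarrow> nat) \<Rightarrow> complex"
  assumes "d \<ge> 1"
    and "mpoly d p" and "mpoly d q"
    and "\<forall>z\<in>polydisc d. mpeval d p z \<noteq> 0"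
    and "vanishes_to_order d p (\<lambda>_. 1) M"
  shows "nt_bounded d (\<lambda>z. mpeval d q z / mpeval d p z) (\<lambda>_. 1)
           \<longleftrightarrow> vanishes_to_order_ge d q (\<lambda>_. 1) M"
proof -
  obtain bp \<beta>0 where bp: "mpoly d bp" and shp: "\<And>\<zeta>. mpeval d p (\<lambda>i. 1 - \<zeta> i) = mpeval d bp \<zeta>"
    and vanp: "\<forall>\<beta>. mdeg d \<beta> < M \<longrightarrow> bp \<beta> = 0" and \<beta>0: "mdeg d \<beta>0 = M" "bp \<beta>0 \<noteq> 0"
    using assms(5) unfolding vanishes_to_order_def by auto
  have nzb: "mpeval d bp \<zeta> \<noteq> 0" if "\<forall>i<d. cmod (1 - \<zeta> i) < 1" for \<zeta>
  proof -
    have "(\<lambda>i. 1 - \<zeta> i) \<in> polydisc d" unfolding polydisc_def using that by auto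
    then show ?thesis using assms(4) shp by metis
  qed
  have HM: "\<forall>w. (\<forall>i<d. 0 < Re (w i)) \<longrightarrow> mpeval d (restr d M bp) w \<noteq> 0"
    using hom_nonzero[OF bp vanp nzb \<beta>0] by blast
  show ?thesis
  proof
    assume nt: "nt_bounded d (\<lambda>z. mpeval d q z / mpeval d p z) (\<lambda>_. 1)"
    show "vanishes_to_order_ge d q (\<lambda>_. 1) M"
    proof (rule ccontr)
      assume nv: "\<not> vanishes_to_order_ge d q (\<lambda>_. 1) M"
      obtain bq where bq: "mpoly d bq" and shq: "\<And>\<zeta>. mpeval d q (\<lambda>i. 1 - \<zeta> i) = mpeval d bq \<zeta>"
        using shift_exists[OF assms(3)] by blast
      obtain \<beta>1 where \<beta>1: "mdeg d \<beta>1 < M" "bq \<beta>1 \<noteq> 0"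
        using nv bq shq unfolding vanishes_to_order_ge_def by auto
      have bnd: "\<forall>c>1. \<exists>\<delta>>0. \<exists>B. \<forall>\<zeta>\<in>Defs.AR d c. cmod (\<zeta> 0) < \<delta> \<longrightarrow> cmod (mpeval d bq \<zeta> / mpeval d bp \<zeta>) \<le> B"
        using nt unfolding nt_bounded_def shp shq by simp
      show False by (rule dir_onlyif[OF assms(1) bp vanp HM bq \<beta>1 bnd])
    qed
  next
    assume "vanishes_to_order_ge d q (\<lambda>_. 1) M"
    then obtain bq where bq: "mpoly d bq" and shq: "\<And>\<zeta>. mpeval d q (\<lambda>i. 1 - \<zeta> i) = mpeval d bq \<zeta>"
      and vanq: "\<forall>\<beta>. mdeg d \<beta> < M \<longrightarrow> bq \<beta> = 0"
      unfolding vanishes_to_order_ge_def by auto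
    show "nt_bounded d (\<lambda>z. mpeval d q z / mpeval d p z) (\<lambda>_. 1)"
      unfolding nt_bounded_def shp shq
    proof (intro allI impI)
      fix c :: real assume c: "1 < c"
      show "\<exists>\<delta>>0. \<exists>B. \<forall>\<zeta>\<in>Defs.AR d c. cmod (\<zeta> 0) < \<delta> \<longrightarrow> cmod (mpeval d bq \<zeta> / mpeval d bp \<zeta>) \<le> B"
        by (rule dir_if[OF assms(1) bp vanp HM bq vanq c hom_lower[OF HM c]])
    qed
  qed
qed

end
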